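(* Fix a start node $s\in V$ and let $\ell_a,\ell_b$ be two labels with start node $s$ whose node sets do not contain $s$ (i.e. not fully extended), such that $v(\ell_a)=v(\ell_b)$ and $$\bar c(\ell_a)\le \bar c(\ell_b),\qquad t(\ell_a)\le t(\ell_b),\qquad \mathscr N(\ell_a)\subseteq \mathscr N(\ell_b).$$ Then $\ell_a$ dominates $\ell_b$ in the following sense: for every finite sequence of nodes $j_1,\dots,j_m$ with $j_m=s$ such that successively extending $\ell_b$ by $j_1,\dots,j_m$ is a valid sequence of extensions producing a fully-extended label $\ell_b^*$ with $t(\ell_b^* )\le q(\ell_b^* )$ (a length-feasible cycle), successively extending $\ell_a$ by $j_1,\dots,j_m$ is also a valid sequence of extensions, and the resulting fully-extended label $\ell_a^*$ satisfies $t(\ell_a^* )\le q(\ell_a^* )$ and $\bar c(\ell_a^* )\le \bar c(\ell_b^* )$.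
   Context: $G=(V,E)$ is an undirected graph with a critical time $q_i>0$ for each node $i\in V$, a travel time $t_{i,j}=t_{j,i}\ge 0$ for each edge $\{i,j\}\in E$, and a weight $\pi_i\in\mathbb R$ for each node (no sign restriction). Fix a start node $s\in V$. A label represents a path $P=(i_0,i_1,\dots,i_K)$ in $G$ with $i_0=s$ and is the tuple $\ell=(\mathscr N,v,\bar c,t,q)$ with $\mathscr N(\ell)=\{i_1,\dots,i_K\}$, $v(\ell)=i_K$, $\bar c(\ell)=1-\sum_{i\in\mathscr N(\ell)}\pi_i$, $t(\ell)=\sum_{k=1}^K t_{i_{k-1},i_k}$, $q(\ell)=\min_{k=0,\dots,K} q_{i_k}$. The initial label is $\ell_s=(\emptyset,s,1,0,q_s)$. A label $\ell$ may be extended by a node $j\in V\setminus\mathscr N(\ell)$ with $\{v(\ell),j\}\in E$, giving the label $\ell^+$ with $\mathscr N(\ell^+)=\mathscr N(\ell)\cup\{j\}$, $v(\ell^+)=j$, $\bar c(\ell^+)=\bar c(\ell)-\pi_j$, $t(\ell^+)=t(\ell)+t_{v(\ell),j}$, $q(\ell^+)=\min\{q(\ell),q_j\}$. A label $\ell\neq\ell_s$ is fully extended if $v(\ell)=s$; it then represents a cycle, whose reduced cost is $\bar c(\ell)$ and which is length-feasible iff $t(\ell)\le q(\ell)$. *)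

theory Defs
  imports Complex_Main
begin

text \<open>Labels (N, v, cbar, t, q) of the labeling algorithm.\<close>
record 'a label =
  lnodes :: "'a set"
  lvert  :: 'a
  lcost  :: real
  ltime  :: real
  lcrit  :: real

fun is_walk :: "'a set \<Rightarrow> 'a set set \<Rightarrow> 'a list \<Rightarrow> bool" where
  "is_walk V E [] = False"
| "is_walk V E [i] = (i \<in> V)"
| "is_walk V E (i # j # is) = (i \<in> V \<and> {i, j} \<in> E \<and> is_walk V E (j # is))"

fun path_time :: "('a \<Rightarrow> 'a \<Rightarrow> real) \<Rightarrow> 'a list \<Rightarrow> real" where
  "path_time tt [] = 0"
| "path_time tt [i] = 0"
| "path_time tt (i # j # is) = tt i j + path_time tt (j # is)"

text \<open>The label representing the path P = s # is (so the node set is the set of i_1..i_K).\<close>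
definition label_of_path ::
  "('a \<Rightarrow> 'a \<Rightarrow> real) \<Rightarrow> ('a \<Rightarrow> real) \<Rightarrow> ('a \<Rightarrow> real) \<Rightarrow> 'a \<Rightarrow> 'a list \<Rightarrow> 'a label" where
  "label_of_path tt qc \<pi> s is =
     \<lparr> lnodes = set is,
       lvert = last (s # is),
       lcost = 1 - (\<Sum>i\<in>set is. \<pi> i),
       ltime = path_time tt (s # is),
       lcrit = Min (qc ` set (s # is)) \<rparr>"

definition can_extend :: "'a set \<Rightarrow> 'a set set \<Rightarrow> 'a label \<Rightarrow> 'a \<Rightarrow> bool" where
  "can_extend V E l j = (j \<in> V \<and> j \<notin> lnodes l \<and> {lvert l, j} \<in> E)"

definition extend ::
  "('a \<Rightarrow> 'a \<Rightarrow> real) \<Rightarrow> ('a \<Rightarrow> real) \<Rightarrow> ('a \<Rightarrow> real) \<Rightarrow> 'a label \<Rightarrow> 'a \<Rightarrow> 'a label" where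
  "extend tt qc \<pi> l j =
     \<lparr> lnodes = insert j (lnodes l),
       lvert = j,
       lcost = lcost l - \<pi> j,
       ltime = ltime l + tt (lvert l) j,
       lcrit = min (lcrit l) (qc j) \<rparr>"

fun extend_seq ::
  "('a \<Rightarrow> 'a \<Rightarrow> real) \<Rightarrow> ('a \<Rightarrow> real) \<Rightarrow> ('a \<Rightarrow> real) \<Rightarrow> 'a label \<Rightarrow> 'a list \<Rightarrow> 'a label" where
  "extend_seq tt qc \<pi> l [] = l"
| "extend_seq tt qc \<pi> l (j # js) = extend_seq tt qc \<pi> (extend tt qc \<pi> l j) js"

fun valid_ext_seq ::
  "'a set \<Rightarrow> 'a set set \<Rightarrow> ('a \<Rightarrow> 'a \<Rightarrow> real) \<Rightarrow> ('a \<Rightarrow> real) \<Rightarrow> ('a \<Rightarrow> real)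
   \<Rightarrow> 'a label \<Rightarrow> 'a list \<Rightarrow> bool" where
  "valid_ext_seq V E tt qc \<pi> l [] = True"
| "valid_ext_seq V E tt qc \<pi> l (j # js) =
     (can_extend V E l j \<and> valid_ext_seq V E tt qc \<pi> (extend tt qc \<pi> l j) js)"

end

theory Submission
  imports Defs
begin

lemma dom_gen:
  "\<lbrakk> lvert la = lvert lb; lnodes la \<subseteq> lnodes lb; lcost la \<le> lcost lb; ltime la \<le> ltime lb;
     lcrit lb \<le> lcrit la; valid_ext_seq V E tt qc \<pi> lb js \<rbrakk> \<Longrightarrow>
   valid_ext_seq V E tt qc \<pi> la js \<and>
   lvert (extend_seq tt qc \<pi> la js) = lvert (extend_seq tt qc \<pi> lb js) \<and>
   lcost (extend_seq tt qc \<pi> la js) \<le> lcost (extend_seq tt qc \<pi> lb js) \<and>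
   ltime (extend_seq tt qc \<pi> la js) \<le> ltime (extend_seq tt qc \<pi> lb js) \<and>
   lcrit (extend_seq tt qc \<pi> lb js) \<le> lcrit (extend_seq tt qc \<pi> la js)"
proof (induction js arbitrary: la lb)
  case Nil
  then show ?case by simp
next
  case (Cons j js)
  have c: "can_extend V E la j" using Cons.prems by (auto simp: can_extend_def)
  have "valid_ext_seq V E tt qc \<pi> (extend tt qc \<pi> la j) js \<and>
   lvert (extend_seq tt qc \<pi> (extend tt qc \<pi> la j) js) = lvert (extend_seq tt qc \<pi> (extend tt qc \<pi> lb j) js) \<and>
   lcost (extend_seq tt qc \<pi> (extend tt qc \<pi> la j) js) \<le> lcost (extend_seq tt qc \<pi> (extend tt qc \<pi> lb j) js) \<and>
   ltime (extend_seq tt qc \<pi> (extend tt qc \<pi> la j) js) \<le> ltime (extend_seq tt qc \<pi> (extend tt qc \<pi> lb j) js) \<and>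
   lcrit (extend_seq tt qc \<pi> (extend tt qc \<pi> lb j) js) \<le> lcrit (extend_seq tt qc \<pi> (extend tt qc \<pi> la j) js)"
    apply (rule Cons.IH)
    using Cons.prems by (auto simp: extend_def)
  then show ?case using c by simp
qed

theorem lemma1:
  fixes V :: "'a set" and E :: "'a set set"
    and tt :: "'a \<Rightarrow> 'a \<Rightarrow> real" and qc :: "'a \<Rightarrow> real" and \<pi> :: "'a \<Rightarrow> real"
    and s :: 'a and Pa Pb js :: "'a list"
  assumes finV: "finite V"
    and E_sub: "\<forall>e\<in>E. \<exists>i j. e = {i, j} \<and> i \<in> V \<and> j \<in> V"
    and q_pos: "\<forall>i\<in>V. qc i > 0"
    and t_sym: "\<forall>i j. {i, j} \<in> E \<longrightarrow> tt i j = tt j i"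
    and t_nonneg: "\<forall>i j. {i, j} \<in> E \<longrightarrow> tt i j \<ge> 0"
    and sV: "s \<in> V"
    and walk_a: "is_walk V E (s # Pa)"
    and walk_b: "is_walk V E (s # Pb)"
    and not_full_a: "s \<notin> lnodes (label_of_path tt qc \<pi> s Pa)"
    and not_full_b: "s \<notin> lnodes (label_of_path tt qc \<pi> s Pb)"
    and same_v: "lvert (label_of_path tt qc \<pi> s Pa) = lvert (label_of_path tt qc \<pi> s Pb)"
    and cost_le: "lcost (label_of_path tt qc \<pi> s Pa) \<le> lcost (label_of_path tt qc \<pi> s Pb)"
    and time_le: "ltime (label_of_path tt qc \<pi> s Pa) \<le> ltime (label_of_path tt qc \<pi> s Pb)"
    and nodes_sub: "lnodes (label_of_path tt qc \<pi> s Pa) \<subseteq> lnodes (label_of_path tt qc \<pi> s Pb)"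
    and js_ne: "js \<noteq> []"
    and js_last: "last js = s"
    and valid_b: "valid_ext_seq V E tt qc \<pi> (label_of_path tt qc \<pi> s Pb) js"
    and feas_b: "ltime (extend_seq tt qc \<pi> (label_of_path tt qc \<pi> s Pb) js)
                 \<le> lcrit (extend_seq tt qc \<pi> (label_of_path tt qc \<pi> s Pb) js)"
  shows "valid_ext_seq V E tt qc \<pi> (label_of_path tt qc \<pi> s Pa) js
    \<and> ltime (extend_seq tt qc \<pi> (label_of_path tt qc \<pi> s Pa) js)
        \<le> lcrit (extend_seq tt qc \<pi> (label_of_path tt qc \<pi> s Pa) js)
    \<and> lcost (extend_seq tt qc \<pi> (label_of_path tt qc \<pi> s Pa) js)
        \<le> lcost (extend_seq tt qc \<pi> (label_of_path tt qc \<pi> s Pb) js)"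
  proof -
  let ?A = "label_of_path tt qc \<pi> s Pa" and ?B = "label_of_path tt qc \<pi> s Pb"
  have sub: "set Pa \<subseteq> set Pb" using nodes_sub by (simp add: label_of_path_def)
  have "Min (qc ` set (s # Pb)) \<le> Min (qc ` set (s # Pa))"
    by (rule Min_antimono) (use sub in auto)
  hence crit: "lcrit ?B \<le> lcrit ?A" by (simp add: label_of_path_def)
  from dom_gen[OF same_v nodes_sub cost_le time_le crit valid_b]
  show ?thesis using feas_b by linarith
qed

end
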